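(* Let $\varphi=\mathrm{vec}(A)$ and $\varphi_0=\mathrm{vec}(A_0)$ with $A,A_0\in\mathbb{R}^{(p-r)\times r}$, $\|A\|_2<1$, $\|A_0\|_2<1$. Then there exists a matrix $R_U(\varphi,\varphi_0)\in\mathbb{R}^{p\times r}$ such that $$\mathrm{vec}\{U(\varphi)-U(\varphi_0)\}=DU(\varphi_0)(\varphi-\varphi_0)+\mathrm{vec}\{R_U(\varphi,\varphi_0)\},\qquad \|R_U(\varphi,\varphi_0)\|_F\le 8\|\varphi-\varphi_0\|_2^2 .$$ Equivalently, in matrix form, $$U(\varphi)-U(\varphi_0)=2(I_p-X_{\varphi_0})^{-1}(X_\varphi-X_{\varphi_0})(I_p-X_{\varphi_0})^{-1}I_{p\times r}+R_U(\varphi,\varphi_0).$$ Moreover $\|U(\varphi)-U(\varphi_0)\|_F\le 2\sqrt2\,\|\varphi-\varphi_0\|_2$ for all such $\varphi,\varphi_0$.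
   Context: Fix integers $1\le r\le p$. For $A\in\mathbb{R}^{(p-r)\times r}$ write $\varphi=\mathrm{vec}(A)\in\mathbb{R}^{(p-r)r}$ (column-stacking vectorization), $X_\varphi=\begin{bmatrix}0_{r\times r}&-A^{T}\\ A&0_{(p-r)\times(p-r)}\end{bmatrix}$ and $I_{p\times r}=\begin{bmatrix}I_r\\0_{(p-r)\times r}\end{bmatrix}$. The Cayley parameterization is $U(\varphi)=(I_p+X_\varphi)(I_p-X_\varphi)^{-1}I_{p\times r}$, considered on the domain $\{\varphi=\mathrm{vec}(A):\|A\|_2<1\}$; it takes values in $\mathbb{O}(p,r)=\{U\in\mathbb{R}^{p\times r}:U^TU=I_r\}$, and explicitly $U(\varphi)=\begin{bmatrix}(I_r-A^TA)(I_r+A^TA)^{-1}\\ 2A(I_r+A^TA)^{-1}\end{bmatrix}$. Its derivative is $DU(\varphi)=2\,[I_{p\times r}^T(I_p-X_\varphi)^{-T}\otimes(I_p-X_\varphi)^{-1}]\,\Gamma$, where $\Gamma=(I_{p^2}-K_{pp})(\Theta_1^T\otimes\Theta_2^T)$, $\Theta_1=I_{p\times r}^T$, $\Theta_2=[0_{(p-r)\times r},I_{p-r}]$ (so that $\Gamma\varphi=\mathrm{vec}(X_\varphi)$), and $K_{pq}$ denotes the commutation matrix, $\mathrm{vec}(M^T)=K_{pq}\mathrm{vec}(M)$ for $M\in\mathbb{R}^{p\times q}$. $\|\cdot\|_2$ is the spectral (Euclidean) norm and $\|\cdot\|_F$ the Frobenius norm. *)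

theory Defs
  imports "Jordan_Normal_Form.Matrix"
begin

text \<open>Matrices are Jordan_Normal_Form matrices (explicit dimensions), since p and r vary
and p - r may be 0.\<close>

text \<open>Column-stacking vectorization: entry (i,j) of an m x n matrix goes to index i + m*j.\<close>
definition vecm :: "'a mat \<Rightarrow> 'a vec" where
  "vecm M = vec (dim_row M * dim_col M) (\<lambda>k. M $$ (k mod dim_row M, k div dim_row M))"

definition vnorm :: "real vec \<Rightarrow> real" where
  "vnorm v = sqrt (\<Sum>i<dim_vec v. (v $ i)^2)"

definition fro_norm :: "real mat \<Rightarrow> real" where
  "fro_norm M = sqrt (\<Sum>i<dim_row M. \<Sum>j<dim_col M. (M $$ (i,j))^2)"

definition spec_norm :: "real mat \<Rightarrow> real" where
  "spec_norm M = Sup {vnorm (M *\<^sub>v x) | x. x \<in> carrier_vec (dim_col M) \<and> vnorm x \<le> 1}"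

definition matinv :: "real mat \<Rightarrow> real mat" where
  "matinv M = (SOME B. B \<in> carrier_mat (dim_row M) (dim_row M) \<and> inverts_mat M B \<and> inverts_mat B M)"

text \<open>Kronecker product and commutation matrix K_{pq}: vec(M^T) = K_{pq} vec(M), M p x q.\<close>
definition kron :: "real mat \<Rightarrow> real mat \<Rightarrow> real mat" where
  "kron A B = mat (dim_row A * dim_row B) (dim_col A * dim_col B)
     (\<lambda>(i,j). A $$ (i div dim_row B, j div dim_col B) * B $$ (i mod dim_row B, j mod dim_col B))"

definition commut :: "nat \<Rightarrow> nat \<Rightarrow> real mat" where
  "commut p q = mat (p*q) (p*q) (\<lambda>(a,b). if a = b div p + q * (b mod p) then 1 else 0)"

definition Ipr :: "nat \<Rightarrow> nat \<Rightarrow> real mat" where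
  "Ipr p r = mat p r (\<lambda>(i,j). if i = j then 1 else 0)"

definition Xphi :: "nat \<Rightarrow> nat \<Rightarrow> real mat \<Rightarrow> real mat" where
  "Xphi p r A = four_block_mat (0\<^sub>m r r) (- transpose_mat A) A (0\<^sub>m (p-r) (p-r))"

definition Ucay :: "nat \<Rightarrow> nat \<Rightarrow> real mat \<Rightarrow> real mat" where
  "Ucay p r A = (1\<^sub>m p + Xphi p r A) * matinv (1\<^sub>m p - Xphi p r A) * Ipr p r"

definition Theta1 :: "nat \<Rightarrow> nat \<Rightarrow> real mat" where
  "Theta1 p r = transpose_mat (Ipr p r)"

definition Theta2 :: "nat \<Rightarrow> nat \<Rightarrow> real mat" where
  "Theta2 p r = mat (p-r) p (\<lambda>(i,j). if j = i + r then 1 else 0)"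

definition Gamma :: "nat \<Rightarrow> nat \<Rightarrow> real mat" where
  "Gamma p r = (1\<^sub>m (p*p) - commut p p) *
      kron (transpose_mat (Theta1 p r)) (transpose_mat (Theta2 p r))"

definition DU :: "nat \<Rightarrow> nat \<Rightarrow> real mat \<Rightarrow> real mat" where
  "DU p r A = 2 \<cdot>\<^sub>m (kron (transpose_mat (Ipr p r) * transpose_mat (matinv (1\<^sub>m p - Xphi p r A)))
                        (matinv (1\<^sub>m p - Xphi p r A)) * Gamma p r)"

end

theory Submission imports Defs "Jordan_Normal_Form.Determinant" begin

lemma cs_sum:
  fixes a b :: "nat \<Rightarrow> real"
  shows "(\<Sum>i<n. a i * b i)^2 \<le> (\<Sum>i<n. (a i)^2) * (\<Sum>i<n. (b i)^2)"
proof -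
  define Sa where "Sa = (\<Sum>i<n. (a i)^2)"
  define Sb where "Sb = (\<Sum>i<n. (b i)^2)"
  define Sab where "Sab = (\<Sum>i<n. a i * b i)"
  have e1: "(\<Sum>i<n. \<Sum>j<n. (a i)^2 * (b j)^2) = Sa*Sb" unfolding Sa_def Sb_def by (simp add: sum_product)
  have e2: "(\<Sum>i<n. \<Sum>j<n. (a j)^2 * (b i)^2) = Sa*Sb" unfolding e1[symmetric]
    by (rule sum.swap)
  have e3a: "Sab * Sab = (\<Sum>i<n. \<Sum>j<n. (a i * b i) * (a j * b j))" unfolding Sab_def by (rule sum_product)
  have e3: "(\<Sum>i<n. \<Sum>j<n. 2 * ((a i * b i) * (a j * b j))) = 2 * Sab^2"
    by (simp only: power2_eq_square e3a sum_distrib_left)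
  have pt: "(a i * b j - a j * b i)^2 = (a i)^2 * (b j)^2 + (a j)^2 * (b i)^2 - 2 * ((a i * b i) * (a j * b j))" for i j
    by (simp add: power2_diff power_mult_distrib mult_ac)
  have "0 \<le> (\<Sum>i<n. \<Sum>j<n. (a i * b j - a j * b i)^2)"
    by (intro sum_nonneg) auto
  also have "\<dots> = (\<Sum>i<n. \<Sum>j<n. (a i)^2 * (b j)^2) + (\<Sum>i<n. \<Sum>j<n. (a j)^2 * (b i)^2) - (\<Sum>i<n. \<Sum>j<n. 2 * ((a i * b i) * (a j * b j)))"
    by (simp only: pt sum_subtractf sum.distrib)
  also have "\<dots> = 2 * (Sa * Sb) - 2 * Sab^2"
    by (simp only: e1 e2 e3)
  finally show ?thesis unfolding Sa_def Sb_def Sab_def by simp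
qed

lemma sum_div_mod:
  fixes f :: "nat \<Rightarrow> nat \<Rightarrow> 'b::comm_monoid_add"
  shows "(\<Sum>k<a*b. f (k mod a) (k div a)) = (\<Sum>j<b. \<Sum>i<a. f i j)"
proof (induction b)
  case 0 then show ?case by simp
next
  case (Suc b)
  have "{..<a * Suc b} = {..<a*b} \<union> {a*b..<a*b+a}" by auto
  then have "(\<Sum>k<a*Suc b. f (k mod a) (k div a)) = (\<Sum>k<a*b. f (k mod a) (k div a)) + (\<Sum>k\<in>{a*b..<a*b+a}. f (k mod a) (k div a))"
    by (simp add: sum.union_disjoint ivl_disj_int)
  also have "(\<Sum>k\<in>{a*b..<a*b+a}. f (k mod a) (k div a)) = (\<Sum>i<a. f i b)"
  proof -
    have "(\<Sum>k\<in>{a*b..<a*b+a}. f (k mod a) (k div a)) = (\<Sum>i<a. f ((a*b+i) mod a) ((a*b+i) div a))"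
      by (rule sum.reindex_bij_witness[where j="\<lambda>k. k - a*b" and i="\<lambda>i. a*b+i"]) auto
    also have "\<dots> = (\<Sum>i<a. f i b)" by (intro sum.cong refl) auto
    finally show ?thesis .
  qed
  finally show ?case using Suc by simp
qed

definition fs :: "real mat \<Rightarrow> real" where
  "fs M = (\<Sum>j<dim_col M. \<Sum>i<dim_row M. (M $$ (i,j))^2)"

lemma fro_fs: "fro_norm M = sqrt (fs M)"
  unfolding fro_norm_def fs_def by (subst sum.swap) (rule refl)

lemma fs_nonneg: "0 \<le> fs M" unfolding fs_def by (intro sum_nonneg) auto

lemma sp_self: "(v::real vec) \<bullet> v = (\<Sum>i<dim_vec v. (v$i)^2)"
  unfolding scalar_prod_def by (simp add: power2_eq_square atLeast0LessThan)

lemma sp_self_nonneg: "0 \<le> (v::real vec) \<bullet> v" unfolding sp_self by (intro sum_nonneg) auto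

lemma fs_col: "fs M = (\<Sum>j<dim_col M. col M j \<bullet> col M j)"
  unfolding fs_def sp_self by (intro sum.cong refl) (auto simp: power2_eq_square)

lemma fs_transpose: "fs (transpose_mat M) = fs M"
  unfolding fs_def by (subst sum.swap) simp

lemma mv_cs:
  assumes D: "D \<in> carrier_mat n m" and v: "v \<in> carrier_vec m"
  shows "(D *\<^sub>v v) \<bullet> (D *\<^sub>v v) \<le> fs D * (v \<bullet> v)"
proof -
  have "(D *\<^sub>v v) \<bullet> (D *\<^sub>v v) = (\<Sum>i<n. (\<Sum>k<m. D $$ (i,k) * v $ k)^2)"
    unfolding sp_self using D v by (intro sum.cong) (auto simp: scalar_prod_def atLeast0LessThan)
  also have "\<dots> \<le> (\<Sum>i<n. (\<Sum>k<m. (D $$ (i,k))^2) * (\<Sum>k<m. (v $ k)^2))"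
    by (intro sum_mono cs_sum)
  also have "\<dots> = fs D * (v \<bullet> v)"
    unfolding fs_def sp_self using D v
    by (simp add: sum_distrib_right[symmetric] sum.swap[of _ "{..<n}"])
  finally show ?thesis .
qed

lemma left_bound:
  assumes N: "N \<in> carrier_mat k n" and Q: "Q \<in> carrier_mat n m"
    and b: "\<And>v. v \<in> carrier_vec n \<Longrightarrow> (N *\<^sub>v v) \<bullet> (N *\<^sub>v v) \<le> c * (v \<bullet> v)"
  shows "fs (N * Q) \<le> c * fs Q"
proof -
  have "fs (N * Q) = (\<Sum>j<m. (N *\<^sub>v col Q j) \<bullet> (N *\<^sub>v col Q j))"
    unfolding fs_col using N Q by (intro sum.cong) (auto simp: mult_mat_vec_def)
  also have "\<dots> \<le> (\<Sum>j<m. c * (col Q j \<bullet> col Q j))"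
    using Q by (intro sum_mono b) auto
  also have "\<dots> = c * fs Q" unfolding fs_col sum_distrib_left using Q by simp
  finally show ?thesis .
qed

lemma fs_mult:
  assumes D: "D \<in> carrier_mat k n" and Q: "Q \<in> carrier_mat n m"
  shows "fs (D * Q) \<le> fs D * fs Q"
  by (rule left_bound[OF D Q mv_cs[OF D]])

lemma contraction:
  fixes T N :: "real mat"
  assumes T: "T \<in> carrier_mat n n" and N: "N \<in> carrier_mat n n" and TN: "T * N = 1\<^sub>m n"
    and sym: "\<And>i j. i < n \<Longrightarrow> j < n \<Longrightarrow> T $$ (i,j) + T $$ (j,i) = (if i = j then 2 else 0)"
    and v: "v \<in> carrier_vec n"
  shows "(N *\<^sub>v v) \<bullet> (N *\<^sub>v v) \<le> v \<bullet> v"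
proof -
  define w where "w = N *\<^sub>v v"
  have w: "w \<in> carrier_vec n" using N v unfolding w_def by auto
  have Tw: "T *\<^sub>v w = v" unfolding w_def
    using assoc_mult_mat_vec[OF T N v, symmetric] TN v by (simp add: one_mult_mat_vec)
  define s where "s = (\<Sum>i<n. \<Sum>j<n. T $$ (i,j) * w $ i * w $ j)"
  have s1: "w \<bullet> v = s" unfolding Tw[symmetric] s_def scalar_prod_def using T w
    by (simp add: atLeast0LessThan scalar_prod_def sum_distrib_left mult.commute mult.left_commute)
  have s2: "s = (\<Sum>i<n. \<Sum>j<n. T $$ (j,i) * w $ i * w $ j)"
    unfolding s_def by (subst sum.swap) (simp add: mult.commute mult.left_commute)
  have "2 * s = s + (\<Sum>i<n. \<Sum>j<n. T $$ (j,i) * w $ i * w $ j)" using s2 by simp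
  also have "\<dots> = (\<Sum>i<n. \<Sum>j<n. (T $$ (i,j) + T $$ (j,i)) * w $ i * w $ j)"
    unfolding s_def by (simp add: sum.distrib[symmetric] distrib_right)
  also have "\<dots> = (\<Sum>i<n. \<Sum>j<n. (if i = j then 2 * (w $ i * w $ j) else 0))"
    by (intro sum.cong refl) (simp add: sym)
  also have "\<dots> = 2 * (w \<bullet> w)" unfolding sp_self using w
    by (simp add: sum_distrib_left power2_eq_square)
  finally have ww: "w \<bullet> w = w \<bullet> v" using s1 by simp
  have "(w \<bullet> v)^2 \<le> (w \<bullet> w) * (v \<bullet> v)"
    using cs_sum[of "\<lambda>i. w $ i" "\<lambda>i. v $ i" n] w v
    unfolding sp_self by (simp add: scalar_prod_def atLeast0LessThan)
  then have "(w \<bullet> w) * (w \<bullet> w) \<le> (w \<bullet> w) * (v \<bullet> v)" using ww by (simp add: power2_eq_square)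
  then show ?thesis unfolding w_def[symmetric] using sp_self_nonneg[of w] sp_self_nonneg[of v]
    by (cases "w \<bullet> w = 0") (auto simp: mult_le_cancel_left)
qed

lemma sym_form:
  fixes T :: "real mat"
  assumes T: "T \<in> carrier_mat n n"
    and sym: "\<And>i j. i < n \<Longrightarrow> j < n \<Longrightarrow> T $$ (i,j) + T $$ (j,i) = (if i = j then 2 else 0)"
    and w: "w \<in> carrier_vec n"
  shows "w \<bullet> (T *\<^sub>v w) = w \<bullet> w"
proof -
  define s where "s = (\<Sum>i<n. \<Sum>j<n. T $$ (i,j) * w $ i * w $ j)"
  have s1: "w \<bullet> (T *\<^sub>v w) = s" unfolding s_def scalar_prod_def using T w
    by (simp add: atLeast0LessThan scalar_prod_def sum_distrib_left mult.commute mult.left_commute)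
  have s2: "s = (\<Sum>i<n. \<Sum>j<n. T $$ (j,i) * w $ i * w $ j)"
    unfolding s_def by (subst sum.swap) (simp add: mult.commute mult.left_commute)
  have "2 * s = s + (\<Sum>i<n. \<Sum>j<n. T $$ (j,i) * w $ i * w $ j)" using s2 by simp
  also have "\<dots> = (\<Sum>i<n. \<Sum>j<n. (T $$ (i,j) + T $$ (j,i)) * w $ i * w $ j)"
    unfolding s_def by (simp add: sum.distrib[symmetric] distrib_right)
  also have "\<dots> = (\<Sum>i<n. \<Sum>j<n. (if i = j then 2 * (w $ i * w $ j) else 0))"
    by (intro sum.cong refl) (simp add: sym)
  also have "\<dots> = 2 * (w \<bullet> w)" unfolding sp_self using w
    by (simp add: sum_distrib_left power2_eq_square)
  finally show ?thesis using s1 by simp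
qed

lemma sp_self_zero: "v \<in> carrier_vec n \<Longrightarrow> (v::real vec) \<bullet> v = 0 \<Longrightarrow> v = 0\<^sub>v n"
  unfolding sp_self by (intro eq_vecI) (auto simp: sum_nonneg_eq_0_iff)

lemma matinv_props:
  fixes T :: "real mat"
  assumes T: "T \<in> carrier_mat n n"
    and sym: "\<And>i j. i < n \<Longrightarrow> j < n \<Longrightarrow> T $$ (i,j) + T $$ (j,i) = (if i = j then 2 else 0)"
  shows "matinv T \<in> carrier_mat n n \<and> T * matinv T = 1\<^sub>m n \<and> matinv T * T = 1\<^sub>m n"
proof -
  have "det T \<noteq> 0"
  proof
    assume "det T = 0"
    then obtain v where v: "v \<in> carrier_vec n" "v \<noteq> 0\<^sub>v n" "T *\<^sub>v v = 0\<^sub>v n"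
      using det_0_iff_vec_prod_zero[OF T] by auto
    have "v \<bullet> v = v \<bullet> (T *\<^sub>v v)" using sym_form[OF T sym v(1)] by simp
    also have "\<dots> = 0" using v by simp
    finally show False using sp_self_zero[OF v(1)] v(2) by simp
  qed
  from det_non_zero_imp_unit[OF T this, of undefined]
  obtain B where B: "B \<in> carrier_mat n n" "B * T = 1\<^sub>m n" "T * B = 1\<^sub>m n"
    unfolding Units_def ring_mat_def by auto
  have ex: "\<exists>B. B \<in> carrier_mat (dim_row T) (dim_row T) \<and> inverts_mat T B \<and> inverts_mat B T"
    using B T unfolding inverts_mat_def by auto
  from someI_ex[OF ex] show ?thesis using T unfolding matinv_def inverts_mat_def by auto
qed

lemma sum_split:
  assumes "r \<le> (p::nat)"
  shows "(\<Sum>i<p. f i) = (\<Sum>i<r. f i) + (\<Sum>i<p-r. (f (i + r) :: 'b::comm_monoid_add))"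
proof -
  have "{..<p} = {..<r} \<union> {r..<p}" using assms by auto
  then have "(\<Sum>i<p. f i) = (\<Sum>i<r. f i) + (\<Sum>i\<in>{r..<p}. f i)"
    by (simp add: sum.union_disjoint ivl_disj_int)
  also have "(\<Sum>i\<in>{r..<p}. f i) = (\<Sum>i<p-r. f (i + r))"
    by (rule sum.reindex_bij_witness[where j="\<lambda>k. k - r" and i="\<lambda>i. i + r"]) auto
  finally show ?thesis .
qed

lemma Xphi_carrier: "A \<in> carrier_mat (p-r) r \<Longrightarrow> r \<le> p \<Longrightarrow> Xphi p r A \<in> carrier_mat p p"
  unfolding Xphi_def by auto

lemma Xphi_index:
  assumes "A \<in> carrier_mat (p-r) r" "r \<le> p" "i < p" "j < p"
  shows "Xphi p r A $$ (i,j) = (if i < r then (if j < r then 0 else - A $$ (j-r,i))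
                                  else (if j < r then A $$ (i-r,j) else 0))"
  using assms unfolding Xphi_def by (auto simp: index_mat_four_block)

lemma Xphi_skew:
  assumes "A \<in> carrier_mat (p-r) r" "r \<le> p" "i < p" "j < p"
  shows "Xphi p r A $$ (i,j) = - Xphi p r A $$ (j,i)"
  using assms by (simp add: Xphi_index)

lemma Xphi_minus:
  assumes "A \<in> carrier_mat (p-r) r" "A0 \<in> carrier_mat (p-r) r" "r \<le> p"
  shows "Xphi p r A - Xphi p r A0 = Xphi p r (A - A0)"
proof -
  have c: "Xphi p r A \<in> carrier_mat p p" "Xphi p r A0 \<in> carrier_mat p p" "Xphi p r (A - A0) \<in> carrier_mat p p"
    using assms by (auto intro!: Xphi_carrier)
  have d: "A - A0 \<in> carrier_mat (p-r) r" using assms by auto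
  show ?thesis
  proof (rule eq_matI)
    fix i j assume "i < dim_row (Xphi p r (A - A0))" "j < dim_col (Xphi p r (A - A0))"
    then have i: "i < p" and j: "j < p" using c(3) by auto
    have "(Xphi p r A - Xphi p r A0) $$ (i,j) = Xphi p r A $$ (i,j) - Xphi p r A0 $$ (i,j)"
      using c i j by simp
    also have "\<dots> = Xphi p r (A - A0) $$ (i,j)"
      unfolding Xphi_index[OF assms(1,3) i j] Xphi_index[OF assms(2,3) i j] Xphi_index[OF d assms(3) i j]
      using assms i j by (cases "i < r"; cases "j < r") simp_all
    finally show "(Xphi p r A - Xphi p r A0) $$ (i,j) = Xphi p r (A - A0) $$ (i,j)" .
  qed (use c in auto)
qed

lemma fs_Xphi:
  assumes A: "A \<in> carrier_mat (p-r) r" and rp: "r \<le> p"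
  shows "fs (Xphi p r A) = 2 * fs A"
proof -
  have c: "Xphi p r A \<in> carrier_mat p p" using Xphi_carrier[OF A rp] .
  have "fs (Xphi p r A) = (\<Sum>j<p. \<Sum>i<p. (Xphi p r A $$ (i,j))^2)" unfolding fs_def using c by simp
  also have "\<dots> = (\<Sum>j<r. \<Sum>i<p-r. (A $$ (i,j))^2) + (\<Sum>j<p-r. \<Sum>i<r. (A $$ (j,i))^2)"
    using A rp by (simp add: sum_split[OF rp] Xphi_index)
  also have "\<dots> = 2 * fs A" unfolding fs_def using A by (simp add: sum.swap[of _ "{..<p-r}"])
  finally show ?thesis .
qed

lemma vecm_carrier: "M \<in> carrier_mat m n \<Longrightarrow> vecm M \<in> carrier_vec (m*n)"
  unfolding vecm_def by auto

lemma vecm_index: "M \<in> carrier_mat m n \<Longrightarrow> k < m*n \<Longrightarrow> vecm M $ k = M $$ (k mod m, k div m)"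
  unfolding vecm_def by auto

lemma vecm_add: "P \<in> carrier_mat m n \<Longrightarrow> Q \<in> carrier_mat m n \<Longrightarrow> vecm (P + Q) = vecm P + vecm Q"
proof (intro eq_vecI)
  fix k assume P: "P \<in> carrier_mat m n" and Q: "Q \<in> carrier_mat m n" and k: "k < dim_vec (vecm P + vecm Q)"
  then have k': "k < m * n" using vecm_carrier[OF P] vecm_carrier[OF Q] by simp
  then have "m > 0" by (cases m) auto
  then have "k mod m < m" "k div m < n" using k' by (auto simp: less_mult_imp_div_less mult.commute)
  then show "vecm (P + Q) $ k = (vecm P + vecm Q) $ k"
    using P Q k' by (simp add: vecm_def)
qed (auto simp: vecm_def)

lemma vecm_minus: "P \<in> carrier_mat m n \<Longrightarrow> Q \<in> carrier_mat m n \<Longrightarrow> vecm (P - Q) = vecm P - vecm Q"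
proof (intro eq_vecI)
  fix k assume P: "P \<in> carrier_mat m n" and Q: "Q \<in> carrier_mat m n" and k: "k < dim_vec (vecm P - vecm Q)"
  then have k': "k < m * n" using vecm_carrier[OF P] vecm_carrier[OF Q] by simp
  then have "m > 0" by (cases m) auto
  then have "k mod m < m" "k div m < n" using k' by (auto simp: less_mult_imp_div_less mult.commute)
  then show "vecm (P - Q) $ k = (vecm P - vecm Q) $ k"
    using P Q k' by (simp add: vecm_def)
qed (auto simp: vecm_def)

lemma vecm_smult: "P \<in> carrier_mat m n \<Longrightarrow> vecm (c \<cdot>\<^sub>m P) = c \<cdot>\<^sub>v vecm P"
proof (intro eq_vecI)
  fix k assume P: "P \<in> carrier_mat m n" and k: "k < dim_vec (c \<cdot>\<^sub>v vecm P)"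
  then have k': "k < m * n" using vecm_carrier[OF P] by simp
  then have "m > 0" by (cases m) auto
  then have "k mod m < m" "k div m < n" using k' by (auto simp: less_mult_imp_div_less mult.commute)
  then show "vecm (c \<cdot>\<^sub>m P) $ k = (c \<cdot>\<^sub>v vecm P) $ k"
    using P k' by (simp add: vecm_def)
qed (auto simp: vecm_def)

lemma vnorm_vecm: "M \<in> carrier_mat m n \<Longrightarrow> (vnorm (vecm M))^2 = fs M"
proof -
  assume M: "M \<in> carrier_mat m n"
  have d: "dim_vec (vecm M) = m*n" using vecm_carrier[OF M] by simp
  have dm: "dim_row M = m" "dim_col M = n" using M by auto
  have "(vnorm (vecm M))^2 = (\<Sum>k<m*n. (vecm M $ k)^2)" unfolding vnorm_def d
    by (rule real_sqrt_pow2) (intro sum_nonneg, simp)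
  also have "\<dots> = (\<Sum>k<m*n. (M $$ (k mod m, k div m))^2)"
    by (intro sum.cong refl) (simp add: vecm_index[OF M])
  also have "\<dots> = fs M" unfolding fs_def dm by (rule sum_div_mod)
  finally show ?thesis .
qed

lemma kron_vec:
  assumes B: "B \<in> carrier_mat nb mb" and C: "C \<in> carrier_mat nc mc" and Y: "Y \<in> carrier_mat mc mb"
  shows "kron B C *\<^sub>v vecm Y = vecm (C * Y * transpose_mat B)"
proof (rule eq_vecI)
  have K: "kron B C \<in> carrier_mat (nb*nc) (mb*mc)" using B C unfolding kron_def by auto
  have Z: "C * Y * transpose_mat B \<in> carrier_mat nc nb" using B C Y by auto
  show "dim_vec (kron B C *\<^sub>v vecm Y) = dim_vec (vecm (C * Y * transpose_mat B))"
    using K vecm_carrier[OF Z] by simp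
  fix i assume "i < dim_vec (vecm (C * Y * transpose_mat B))"
  then have i: "i < nc * nb" using vecm_carrier[OF Z] by simp
  then have nc: "nc > 0" by (cases nc) auto
  have i1: "i mod nc < nc" "i div nc < nb" using i nc by (auto simp: less_mult_imp_div_less mult.commute)
  have "(kron B C *\<^sub>v vecm Y) $ i = (\<Sum>j<mc*mb. B $$ (i div nc, j div mc) * C $$ (i mod nc, j mod mc) * Y $$ (j mod mc, j div mc))"
  proof -
    have "(kron B C *\<^sub>v vecm Y) $ i = row (kron B C) i \<bullet> vecm Y" using K i by (simp add: mult.commute)
    also have "\<dots> = (\<Sum>j<mc*mb. row (kron B C) i $ j * vecm Y $ j)"
      unfolding scalar_prod_def using vecm_carrier[OF Y] by (simp add: atLeast0LessThan)
    also have "\<dots> = (\<Sum>j<mc*mb. B $$ (i div nc, j div mc) * C $$ (i mod nc, j mod mc) * Y $$ (j mod mc, j div mc))"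
    proof (intro sum.cong refl)
      fix j assume j: "j \<in> {..<mc*mb}"
      then have mc: "mc > 0" by (cases mc) auto
      have j1: "j mod mc < mc" "j div mc < mb" using j mc by (auto simp: less_mult_imp_div_less mult.commute)
      show "row (kron B C) i $ j * vecm Y $ j = B $$ (i div nc, j div mc) * C $$ (i mod nc, j mod mc) * Y $$ (j mod mc, j div mc)"
        using j i B C Y K by (simp add: vecm_index kron_def row_def mult.commute)
    qed
    finally show ?thesis .
  qed
  also have "\<dots> = (\<Sum>k<mb. \<Sum>l<mc. B $$ (i div nc, k) * C $$ (i mod nc, l) * Y $$ (l, k))"
    by (rule sum_div_mod[of "\<lambda>l k. B $$ (i div nc, k) * C $$ (i mod nc, l) * Y $$ (l, k)"])
  also have "\<dots> = (\<Sum>l<mc. \<Sum>k<mb. B $$ (i div nc, k) * C $$ (i mod nc, l) * Y $$ (l, k))"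
    by (rule sum.swap)
  also have "\<dots> = vecm (C * Y * transpose_mat B) $ i"
    unfolding vecm_index[OF Z i]
    using i i1 B C Y Z by (simp add: scalar_prod_def atLeast0LessThan sum_distrib_left
        mult.commute mult.left_commute)
  finally show "(kron B C *\<^sub>v vecm Y) $ i = vecm (C * Y * transpose_mat B) $ i" .
qed

lemma if01_mult: "(if P then 1 else 0) * (y::real) = (if P then y else 0)" by simp

lemma commut_vec:
  assumes Y: "Y \<in> carrier_mat p q"
  shows "commut p q *\<^sub>v vecm Y = vecm (transpose_mat Y)"
proof (rule eq_vecI)
  have YT: "transpose_mat Y \<in> carrier_mat q p" using Y by auto
  show "dim_vec (commut p q *\<^sub>v vecm Y) = dim_vec (vecm (transpose_mat Y))"
    using vecm_carrier[OF YT] by (simp add: commut_def mult.commute)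
  fix a assume "a < dim_vec (vecm (transpose_mat Y))"
  then have a: "a < q * p" using vecm_carrier[OF YT] by simp
  then have q: "q > 0" by (cases q) auto
  have a1: "a mod q < q" "a div q < p" using a q by (auto simp: less_mult_imp_div_less mult.commute)
  have "(commut p q *\<^sub>v vecm Y) $ a = (\<Sum>b<p*q. (if a = b div p + q * (b mod p) then 1 else 0) * Y $$ (b mod p, b div p))"
  proof -
    have "(commut p q *\<^sub>v vecm Y) $ a = row (commut p q) a \<bullet> vecm Y" using a by (simp add: commut_def mult.commute)
    also have "\<dots> = (\<Sum>b<p*q. row (commut p q) a $ b * vecm Y $ b)"
      unfolding scalar_prod_def using vecm_carrier[OF Y] by (simp add: atLeast0LessThan)
    also have "\<dots> = (\<Sum>b<p*q. (if a = b div p + q * (b mod p) then 1 else 0) * Y $$ (b mod p, b div p))"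
      using a Y by (intro sum.cong refl) (auto simp: commut_def vecm_index mult.commute)
    finally show ?thesis .
  qed
  also have "\<dots> = (\<Sum>k<q. \<Sum>l<p. (if a = k + q * l then 1 else 0) * Y $$ (l, k))"
    by (rule sum_div_mod[of "\<lambda>l k. (if a = k + q * l then 1 else 0) * Y $$ (l, k)"])
  also have "\<dots> = (\<Sum>k<q. if k = a mod q then Y $$ (a div q, k) else 0)"
  proof (intro sum.cong refl)
    fix k assume k: "k \<in> {..<q}"
    have eq: "\<And>l. (a = k + q * l) = (k = a mod q \<and> l = a div q)"
    proof
      fix l assume "a = k + q * l" then show "k = a mod q \<and> l = a div q" using k by auto
    next
      fix l assume "k = a mod q \<and> l = a div q" then show "a = k + q * l" by simp
    qed
    show "(\<Sum>l<p. (if a = k + q * l then 1 else 0) * Y $$ (l, k)) = (if k = a mod q then Y $$ (a div q, k) else 0)"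
      unfolding eq using a1 by (cases "k = a mod q") (auto simp: if01_mult)
  qed
  also have "\<dots> = Y $$ (a div q, a mod q)" using a1 by simp
  also have "\<dots> = vecm (transpose_mat Y) $ a" using a a1 Y by (simp add: vecm_index[OF YT a])
  finally show "(commut p q *\<^sub>v vecm Y) $ a = vecm (transpose_mat Y) $ a" .
qed

lemma Theta2T_mult:
  assumes B: "B \<in> carrier_mat (p-r) m" and rp: "r \<le> p"
  shows "transpose_mat (Theta2 p r) * B = mat p m (\<lambda>(i,k). if r \<le> i then B $$ (i-r,k) else 0)"
proof (rule eq_matI)
  fix i k assume ik: "i < dim_row (mat p m (\<lambda>(i,k). if r \<le> i then B $$ (i-r,k) else 0))"
    "k < dim_col (mat p m (\<lambda>(i,k). if r \<le> i then B $$ (i-r,k) else 0))"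
  then have i: "i < p" and k: "k < m" by auto
  have "(transpose_mat (Theta2 p r) * B) $$ (i,k) = (\<Sum>l<p-r. (if i = l + r then 1 else 0) * B $$ (l,k))"
    using i k B by (simp add: Theta2_def scalar_prod_def atLeast0LessThan)
  also have "\<dots> = (\<Sum>l<p-r. if l = i - r then (if r \<le> i then B $$ (l,k) else 0) else 0)"
    by (intro sum.cong refl) auto
  also have "\<dots> = (if r \<le> i then B $$ (i-r,k) else 0)" using i by auto
  finally show "(transpose_mat (Theta2 p r) * B) $$ (i,k) = mat p m (\<lambda>(i,k). if r \<le> i then B $$ (i-r,k) else 0) $$ (i,k)"
    using i k by simp
qed (use B in \<open>auto simp: Theta2_def\<close>)

lemma Y_form:
  assumes B: "B \<in> carrier_mat (p-r) r" and rp: "r \<le> p"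
  shows "transpose_mat (Theta2 p r) * B * transpose_mat (Ipr p r) = mat p p (\<lambda>(i,j). if r \<le> i \<and> j < r then B $$ (i-r,j) else 0)"
proof (rule eq_matI)
  fix i j assume "i < dim_row (mat p p (\<lambda>(i,j). if r \<le> i \<and> j < r then B $$ (i-r,j) else 0))"
    "j < dim_col (mat p p (\<lambda>(i,j). if r \<le> i \<and> j < r then B $$ (i-r,j) else 0))"
  then have i: "i < p" and j: "j < p" by auto
  have "(transpose_mat (Theta2 p r) * B * transpose_mat (Ipr p r)) $$ (i,j)
     = (\<Sum>k<r. (if r \<le> i then B $$ (i-r,k) else 0) * (if j = k then 1 else 0))"
    unfolding Theta2T_mult[OF B rp] using i j by (simp add: Ipr_def scalar_prod_def atLeast0LessThan)
  also have "\<dots> = (\<Sum>k<r. if k = j then (if r \<le> i then B $$ (i-r,k) else 0) else 0)"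
    by (intro sum.cong refl) auto
  also have "\<dots> = (if r \<le> i \<and> j < r then B $$ (i-r,j) else 0)" by auto
  finally show "(transpose_mat (Theta2 p r) * B * transpose_mat (Ipr p r)) $$ (i,j) = mat p p (\<lambda>(i,j). if r \<le> i \<and> j < r then B $$ (i-r,j) else 0) $$ (i,j)"
    using i j by simp
qed (use B in \<open>auto simp: Theta2_def Ipr_def\<close>)

lemma Gamma_vec:
  assumes B: "B \<in> carrier_mat (p-r) r" and rp: "r \<le> p"
  shows "Gamma p r *\<^sub>v vecm B = vecm (Xphi p r B)"
proof -
  define Y where "Y = transpose_mat (Theta2 p r) * B * transpose_mat (Ipr p r)"
  have Yc: "Y \<in> carrier_mat p p" unfolding Y_def Y_form[OF B rp] by simp
  have Ic: "Ipr p r \<in> carrier_mat p r" unfolding Ipr_def by simp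
  have T2c: "transpose_mat (Theta2 p r) \<in> carrier_mat p (p-r)" unfolding Theta2_def by simp
  have Kc: "kron (Ipr p r) (transpose_mat (Theta2 p r)) \<in> carrier_mat (p*p) ((p-r)*r)"
    using Ic T2c unfolding kron_def by (simp add: mult.commute)
  have Cc: "commut p p \<in> carrier_mat (p*p) (p*p)" unfolding commut_def by simp
  have vB: "vecm B \<in> carrier_vec ((p-r)*r)" using vecm_carrier[OF B] .
  have kv: "kron (Ipr p r) (transpose_mat (Theta2 p r)) *\<^sub>v vecm B = vecm Y"
    unfolding Y_def by (rule kron_vec[OF Ic T2c B])
  have "Gamma p r *\<^sub>v vecm B = (1\<^sub>m (p*p) - commut p p) *\<^sub>v (kron (Ipr p r) (transpose_mat (Theta2 p r)) *\<^sub>v vecm B)"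
    unfolding Gamma_def Theta1_def transpose_transpose
    by (rule assoc_mult_mat_vec[OF _ Kc vB]) (use Cc in auto)
  also have "\<dots> = vecm Y - commut p p *\<^sub>v vecm Y"
    unfolding kv using minus_mult_distrib_mat_vec[OF one_carrier_mat Cc vecm_carrier[OF Yc]] vecm_carrier[OF Yc] by simp
  also have "\<dots> = vecm (Y - transpose_mat Y)"
    unfolding commut_vec[OF Yc] using Yc by (simp add: vecm_minus)
  also have "Y - transpose_mat Y = Xphi p r B"
    using Yc Xphi_carrier[OF B rp] unfolding Y_def Y_form[OF B rp]
    by (intro eq_matI) (auto simp: Xphi_index[OF B rp])
  finally show ?thesis .
qed

lemma right_bound:
  assumes Q: "Q \<in> carrier_mat k n" and N: "N \<in> carrier_mat n n"
    and b: "\<And>v. v \<in> carrier_vec n \<Longrightarrow> (transpose_mat N *\<^sub>v v) \<bullet> (transpose_mat N *\<^sub>v v) \<le> v \<bullet> v"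
  shows "fs (Q * N) \<le> fs Q"
proof -
  have "fs (Q * N) = fs (transpose_mat N * transpose_mat Q)"
    using transpose_mult[OF Q N] fs_transpose[of "Q * N"] by simp
  also have "\<dots> \<le> 1 * fs (transpose_mat Q)"
    by (rule left_bound[of _ n n _ k]) (use Q N b in auto)
  finally show ?thesis by (simp add: fs_transpose)
qed

lemma left_contr:
  assumes N: "N \<in> carrier_mat n n" and Q: "Q \<in> carrier_mat n m"
    and b: "\<And>v. v \<in> carrier_vec n \<Longrightarrow> (N *\<^sub>v v) \<bullet> (N *\<^sub>v v) \<le> v \<bullet> v"
  shows "fs (N * Q) \<le> fs Q"
  using left_bound[OF N Q, of 1] b by simp

lemma Ipr_bound:
  assumes P: "P \<in> carrier_mat k p" and rp: "r \<le> p"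
  shows "fs (P * Ipr p r) \<le> fs P"
proof -
  have ent: "(P * Ipr p r) $$ (i,j) = P $$ (i,j)" if i: "i < k" and jr: "j < r" for i j
  proof -
    have "(P * Ipr p r) $$ (i,j) = (\<Sum>l<p. P $$ (i,l) * (if l = j then 1 else 0))"
      using i jr P by (simp add: Ipr_def scalar_prod_def atLeast0LessThan)
    also have "\<dots> = P $$ (i,j)" using jr rp by (simp add: if_distrib[of "\<lambda>x. _ * x"] cong: if_cong)
    finally show ?thesis .
  qed
  have "fs (P * Ipr p r) = (\<Sum>j<r. \<Sum>i<k. (P $$ (i,j))^2)"
    unfolding fs_def
    apply (rule sum.cong) apply (simp add: Ipr_def)
    apply (rule sum.cong) using P apply simp
    apply (subst ent) using P by auto
  also have "\<dots> \<le> (\<Sum>j<p. \<Sum>i<k. (P $$ (i,j))^2)"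
    using rp by (intro sum_mono2) (auto intro: sum_nonneg)
  also have "\<dots> = fs P" unfolding fs_def using P by simp
  finally show ?thesis .
qed

lemma fs_smult: "fs (c \<cdot>\<^sub>m M) = c^2 * fs M"
  unfolding fs_def by (simp add: sum_distrib_left power_mult_distrib)

lemma smult_mat_vec: "v \<in> carrier_vec (dim_col A) \<Longrightarrow> (c \<cdot>\<^sub>m A) *\<^sub>v v = c \<cdot>\<^sub>v (A *\<^sub>v (v::real vec))"
  by (intro eq_vecI) (auto simp: scalar_prod_def sum_distrib_left mult.assoc)

theorem theorem1:
  fixes p r :: nat and A A0 :: "real mat"
  assumes "1 \<le> r" and "r \<le> p"
    and "A \<in> carrier_mat (p - r) r" and "A0 \<in> carrier_mat (p - r) r"
    and "spec_norm A < 1" and "spec_norm A0 < 1"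
  shows "(\<exists>R \<in> carrier_mat p r.
            vecm (Ucay p r A - Ucay p r A0) = DU p r A0 *\<^sub>v (vecm A - vecm A0) + vecm R
          \<and> fro_norm R \<le> 8 * (vnorm (vecm A - vecm A0))^2
          \<and> Ucay p r A - Ucay p r A0 =
              2 \<cdot>\<^sub>m (matinv (1\<^sub>m p - Xphi p r A0) * (Xphi p r A - Xphi p r A0)
                     * matinv (1\<^sub>m p - Xphi p r A0) * Ipr p r) + R)
       \<and> fro_norm (Ucay p r A - Ucay p r A0) \<le> 2 * sqrt 2 * vnorm (vecm A - vecm A0)"
proof -
  note rp = assms(2) and Ac = assms(3) and A0c = assms(4)
  define X where "X = Xphi p r A"
  define X0 where "X0 = Xphi p r A0"
  define D where "D = X - X0"
  define T where "T = 1\<^sub>m p - X"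
  define T0 where "T0 = 1\<^sub>m p - X0"
  define M where "M = matinv T"
  define M0 where "M0 = matinv T0"
  define I where "I = Ipr p r"
  have Xc: "X \<in> carrier_mat p p" unfolding X_def by (rule Xphi_carrier[OF Ac rp])
  have X0c: "X0 \<in> carrier_mat p p" unfolding X0_def by (rule Xphi_carrier[OF A0c rp])
  have Dc: "D \<in> carrier_mat p p" unfolding D_def using Xc X0c by auto
  have Tc: "T \<in> carrier_mat p p" unfolding T_def using Xc by auto
  have T0c: "T0 \<in> carrier_mat p p" unfolding T0_def using X0c by auto
  have Ic: "I \<in> carrier_mat p r" unfolding I_def Ipr_def by simp
  have symT: "\<And>i j. i < p \<Longrightarrow> j < p \<Longrightarrow> T $$ (i,j) + T $$ (j,i) = (if i = j then 2 else 0)"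
  proof -
    fix i j assume ij: "i < p" "j < p"
    have sk: "X $$ (i,j) + X $$ (j,i) = 0" using Xphi_skew[OF Ac rp ij] unfolding X_def by linarith
    have e: "T $$ (i,j) = (if i = j then 1 else 0) - X $$ (i,j)" "T $$ (j,i) = (if i = j then 1 else 0) - X $$ (j,i)"
      unfolding T_def using ij Xc by auto
    show "T $$ (i,j) + T $$ (j,i) = (if i = j then 2 else 0)" unfolding e using sk by (cases "i = j") auto
  qed
  have symT0: "\<And>i j. i < p \<Longrightarrow> j < p \<Longrightarrow> T0 $$ (i,j) + T0 $$ (j,i) = (if i = j then 2 else 0)"
  proof -
    fix i j assume ij: "i < p" "j < p"
    have sk: "X0 $$ (i,j) + X0 $$ (j,i) = 0" using Xphi_skew[OF A0c rp ij] unfolding X0_def by linarith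
    have e: "T0 $$ (i,j) = (if i = j then 1 else 0) - X0 $$ (i,j)" "T0 $$ (j,i) = (if i = j then 1 else 0) - X0 $$ (j,i)"
      unfolding T0_def using ij X0c by auto
    show "T0 $$ (i,j) + T0 $$ (j,i) = (if i = j then 2 else 0)" unfolding e using sk by (cases "i = j") auto
  qed
  have Mp: "M \<in> carrier_mat p p \<and> T * M = 1\<^sub>m p \<and> M * T = 1\<^sub>m p"
    unfolding M_def by (rule matinv_props[OF Tc symT])
  then have Mc: "M \<in> carrier_mat p p" and TM: "T * M = 1\<^sub>m p" and MT: "M * T = 1\<^sub>m p" by auto
  have M0p: "M0 \<in> carrier_mat p p \<and> T0 * M0 = 1\<^sub>m p \<and> M0 * T0 = 1\<^sub>m p"
    unfolding M0_def by (rule matinv_props[OF T0c symT0])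
  then have M0c: "M0 \<in> carrier_mat p p" and TM0: "T0 * M0 = 1\<^sub>m p" and MT0: "M0 * T0 = 1\<^sub>m p" by auto
  have cM: "\<And>v. v \<in> carrier_vec p \<Longrightarrow> (M *\<^sub>v v) \<bullet> (M *\<^sub>v v) \<le> v \<bullet> v"
    by (rule contraction[OF Tc Mc TM symT])
  have cM0: "\<And>v. v \<in> carrier_vec p \<Longrightarrow> (M0 *\<^sub>v v) \<bullet> (M0 *\<^sub>v v) \<le> v \<bullet> v"
    by (rule contraction[OF T0c M0c TM0 symT0])
  have cM0T: "\<And>v. v \<in> carrier_vec p \<Longrightarrow> (transpose_mat M0 *\<^sub>v v) \<bullet> (transpose_mat M0 *\<^sub>v v) \<le> v \<bullet> v"
  proof -
    fix v :: "real vec" assume v: "v \<in> carrier_vec p"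
    have e: "transpose_mat T0 * transpose_mat M0 = 1\<^sub>m p" using transpose_mult[OF M0c T0c] MT0 by simp
    show "(transpose_mat M0 *\<^sub>v v) \<bullet> (transpose_mat M0 *\<^sub>v v) \<le> v \<bullet> v"
      by (rule contraction[OF _ _ e _ v]) (use T0c M0c symT0 in \<open>auto simp: add.commute\<close>)
  qed
  have D_eq: "D = T0 - T" unfolding D_def T_def T0_def using Xc X0c by (intro eq_matI) auto
  have key: "M - M0 = M * D * M0"
  proof -
    have "M * D * M0 = (M * T0 - M * T) * M0" using D_eq mult_minus_distrib_mat[OF Mc T0c Tc] by simp
    also have "\<dots> = M * T0 * M0 - M * T * M0" by (rule minus_mult_distrib_mat) (use Mc T0c Tc M0c in auto)
    also have "M * T0 * M0 = M" using assoc_mult_mat[OF Mc T0c M0c] TM0 Mc by simp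
    also have "M * T * M0 = M0" using MT M0c by simp
    finally show ?thesis by simp
  qed
  have Ueq: "Ucay p r B = (2 \<cdot>\<^sub>m matinv (1\<^sub>m p - Xphi p r B) - 1\<^sub>m p) * Ipr p r"
    if Bc: "B \<in> carrier_mat (p-r) r" for B
  proof -
    define Y where "Y = Xphi p r B"
    define N where "N = matinv (1\<^sub>m p - Y)"
    have Yc: "Y \<in> carrier_mat p p" unfolding Y_def by (rule Xphi_carrier[OF Bc rp])
    have sym: "\<And>i j. i < p \<Longrightarrow> j < p \<Longrightarrow> (1\<^sub>m p - Y) $$ (i,j) + (1\<^sub>m p - Y) $$ (j,i) = (if i = j then 2 else 0)"
    proof -
      fix i j assume ij: "i < p" "j < p"
      have sk: "Y $$ (i,j) + Y $$ (j,i) = 0" using Xphi_skew[OF Bc rp ij] unfolding Y_def by linarith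
      have e: "(1\<^sub>m p - Y) $$ (i,j) = (if i = j then 1 else 0) - Y $$ (i,j)" "(1\<^sub>m p - Y) $$ (j,i) = (if i = j then 1 else 0) - Y $$ (j,i)"
        using ij Yc by auto
      show "(1\<^sub>m p - Y) $$ (i,j) + (1\<^sub>m p - Y) $$ (j,i) = (if i = j then 2 else 0)" unfolding e using sk by (cases "i = j") auto
    qed
    have Np: "N \<in> carrier_mat p p \<and> (1\<^sub>m p - Y) * N = 1\<^sub>m p \<and> N * (1\<^sub>m p - Y) = 1\<^sub>m p"
      unfolding N_def by (rule matinv_props[OF _ sym]) (use Yc in auto)
    have "1\<^sub>m p + Y = 2 \<cdot>\<^sub>m 1\<^sub>m p - (1\<^sub>m p - Y)" using Yc by (intro eq_matI) auto
    have c1: "2 \<cdot>\<^sub>m 1\<^sub>m p \<in> carrier_mat p p" "1\<^sub>m p - Y \<in> carrier_mat p p" "N \<in> carrier_mat p p"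
      using Np Yc by auto
    note mm = minus_mult_distrib_mat[OF c1]
    have "(1\<^sub>m p + Y) * N = (2 \<cdot>\<^sub>m 1\<^sub>m p) * N - (1\<^sub>m p - Y) * N"
      unfolding \<open>1\<^sub>m p + Y = 2 \<cdot>\<^sub>m 1\<^sub>m p - (1\<^sub>m p - Y)\<close> by (rule mm)
    also have "\<dots> = 2 \<cdot>\<^sub>m N - 1\<^sub>m p" using Np mult_smult_assoc_mat[of "1\<^sub>m p" p p N p 2] left_mult_one_mat[OF c1(3)] by simp
    finally have "(1\<^sub>m p + Y) * N = 2 \<cdot>\<^sub>m N - 1\<^sub>m p" .
    then show ?thesis unfolding Ucay_def Y_def N_def by simp
  qed
  have UA: "Ucay p r A = (2 \<cdot>\<^sub>m M - 1\<^sub>m p) * I" unfolding M_def T_def X_def I_def by (rule Ueq[OF Ac])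
  have UA0: "Ucay p r A0 = (2 \<cdot>\<^sub>m M0 - 1\<^sub>m p) * I" unfolding M0_def T0_def X0_def I_def by (rule Ueq[OF A0c])
  define Z where "Z = M * D * M0"
  have Zc: "Z \<in> carrier_mat p p" unfolding Z_def using Mc Dc M0c by auto
  have UU: "Ucay p r A - Ucay p r A0 = 2 \<cdot>\<^sub>m (Z * I)"
  proof -
    have "Ucay p r A - Ucay p r A0 = ((2 \<cdot>\<^sub>m M - 1\<^sub>m p) - (2 \<cdot>\<^sub>m M0 - 1\<^sub>m p)) * I"
      unfolding UA UA0 by (rule minus_mult_distrib_mat[symmetric]) (use Mc M0c Ic in auto)
    also have "(2 \<cdot>\<^sub>m M - 1\<^sub>m p) - (2 \<cdot>\<^sub>m M0 - 1\<^sub>m p) = 2 \<cdot>\<^sub>m (M - M0)"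
      using Mc M0c by (intro eq_matI) (auto simp: algebra_simps)
    also have "(2 \<cdot>\<^sub>m (M - M0)) * I = 2 \<cdot>\<^sub>m ((M - M0) * I)"
      by (rule mult_smult_assoc_mat) (use Mc M0c Ic in auto)
    finally show ?thesis unfolding key Z_def .
  qed
  define W where "W = M0 * D * M0 * I"
  have Wc: "W \<in> carrier_mat p r" unfolding W_def using M0c Dc Ic by auto
  define R where "R = (Ucay p r A - Ucay p r A0) - 2 \<cdot>\<^sub>m W"
  have UUc: "Ucay p r A - Ucay p r A0 \<in> carrier_mat p r" unfolding UU using Zc Ic by auto
  have Rc: "R \<in> carrier_mat p r" unfolding R_def using UUc Wc by auto
  have goal3: "Ucay p r A - Ucay p r A0 = 2 \<cdot>\<^sub>m W + R"
    unfolding R_def using UUc Wc by (intro eq_matI) auto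
  define Q where "Q = Z - M0 * D * M0"
  have Qeq: "Q = M * D * M0 * D * M0"
  proof -
    have "Q = (M * D - M0 * D) * M0" unfolding Q_def Z_def
      by (rule minus_mult_distrib_mat[symmetric]) (use Mc M0c Dc in auto)
    also have "M * D - M0 * D = (M - M0) * D"
      by (rule minus_mult_distrib_mat[symmetric]) (use Mc M0c Dc in auto)
    finally show ?thesis unfolding key .
  qed
  have Qc: "Q \<in> carrier_mat p p" unfolding Q_def using Zc M0c Dc by auto
  have R_eq: "R = 2 \<cdot>\<^sub>m (Q * I)"
  proof -
    have "Q * I = Z * I - M0 * D * M0 * I"
      unfolding Q_def by (rule minus_mult_distrib_mat) (use Zc M0c Dc Ic in auto)
    then show ?thesis unfolding R_def UU W_def using Zc M0c Dc Ic
      by (intro eq_matI) (auto simp: algebra_simps)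
  qed
  define a where "a = fs (A - A0)"
  have AAc: "A - A0 \<in> carrier_mat (p-r) r" using Ac A0c by auto
  have vn: "vecm A - vecm A0 = vecm (A - A0)" by (rule vecm_minus[OF Ac A0c, symmetric])
  have vn2: "(vnorm (vecm A - vecm A0))^2 = a" unfolding vn a_def by (rule vnorm_vecm[OF AAc])
  have vn0: "0 \<le> vnorm (vecm A - vecm A0)" unfolding vnorm_def by (simp add: sum_nonneg)
  have a0: "0 \<le> a" unfolding a_def by (rule fs_nonneg)
  have DX: "D = Xphi p r (A - A0)" unfolding D_def X_def X0_def by (rule Xphi_minus[OF Ac A0c rp])
  have fD: "fs D = 2 * a" unfolding DX a_def by (rule fs_Xphi[OF AAc rp])
  have fQ: "fs Q \<le> fs D * fs D"
  proof -
    have "fs Q \<le> fs (M * D * M0 * D)" unfolding Qeq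
      by (rule right_bound[OF _ M0c cM0T]) (use Mc Dc M0c in auto)
    also have "M * D * M0 * D = M * (D * M0 * D)"
      by (simp only: assoc_mult_mat[OF Mc Dc M0c] assoc_mult_mat[OF Mc mult_carrier_mat[OF Dc M0c] Dc])
    also have "fs (M * (D * M0 * D)) \<le> fs (D * M0 * D)"
      by (rule left_contr[OF Mc _ cM]) (use Dc M0c in auto)
    also have "D * M0 * D = D * (M0 * D)" using Dc M0c by simp
    also have "fs (D * (M0 * D)) \<le> fs D * fs (M0 * D)"
      by (rule fs_mult[OF Dc]) (use M0c Dc in auto)
    also have "\<dots> \<le> fs D * fs D"
      by (intro mult_left_mono fs_nonneg left_contr[OF M0c Dc cM0])
    finally show ?thesis .
  qed
  have fR: "fs R \<le> 16 * a^2"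
  proof -
    have "fs R = 4 * fs (Q * I)" unfolding R_eq fs_smult by simp
    also have "\<dots> \<le> 4 * fs Q" unfolding I_def using Ipr_bound[OF Qc rp] by simp
    also have "\<dots> \<le> 4 * (fs D * fs D)" using fQ by simp
    finally show ?thesis unfolding fD by (simp add: power2_eq_square)
  qed
  have froR: "fro_norm R \<le> 8 * (vnorm (vecm A - vecm A0))^2"
  proof -
    have "fro_norm R \<le> sqrt (16 * a^2)" unfolding fro_fs using fR by simp
    also have "sqrt (16 * a^2) = 4 * a" using a0 by (simp add: real_sqrt_mult)
    finally show ?thesis unfolding vn2 using a0 by simp
  qed
  have fUU: "fs (Ucay p r A - Ucay p r A0) \<le> 8 * a"
  proof -
    have "fs (Ucay p r A - Ucay p r A0) = 4 * fs (Z * I)" unfolding UU fs_smult by simp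
    also have "\<dots> \<le> 4 * fs Z" unfolding I_def using Ipr_bound[OF Zc rp] by simp
    also have "fs Z \<le> fs (M * D)" unfolding Z_def
      by (rule right_bound[OF _ M0c cM0T]) (use Mc Dc in auto)
    also have "fs (M * D) \<le> fs D" by (rule left_contr[OF Mc Dc cM])
    finally show ?thesis unfolding fD by simp
  qed
  have froU: "fro_norm (Ucay p r A - Ucay p r A0) \<le> 2 * sqrt 2 * vnorm (vecm A - vecm A0)"
  proof -
    have "fro_norm (Ucay p r A - Ucay p r A0) \<le> sqrt (8 * a)" unfolding fro_fs using fUU by simp
    also have "sqrt (8 * a) = 2 * sqrt 2 * sqrt a"
    proof -
      have "sqrt (8 * a) = sqrt (2^2 * 2 * a)" by simp
      also have "\<dots> = 2 * sqrt 2 * sqrt a" by (simp only: real_sqrt_mult real_sqrt_abs abs_numeral)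
      finally show ?thesis .
    qed
    also have "sqrt a = vnorm (vecm A - vecm A0)" unfolding vn2[symmetric] using vn0 by simp
    finally show ?thesis .
  qed
  have Gc: "Gamma p r \<in> carrier_mat (p*p) ((p-r)*r)"
  proof -
    have Kc0: "kron (transpose_mat (Theta1 p r)) (transpose_mat (Theta2 p r)) \<in> carrier_mat (p*p) ((p-r)*r)"
      unfolding kron_def Theta1_def Theta2_def Ipr_def by (simp add: mult.commute)
    have Cc0: "1\<^sub>m (p*p) - commut p p \<in> carrier_mat (p*p) (p*p)"
      by (rule minus_carrier_mat) (simp add: commut_def)
    show ?thesis unfolding Gamma_def by (rule mult_carrier_mat[OF Cc0 Kc0])
  qed
  have Gv: "Gamma p r *\<^sub>v (vecm A - vecm A0) = vecm D" unfolding vn DX by (rule Gamma_vec[OF AAc rp])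
  define B0 where "B0 = transpose_mat I * transpose_mat M0"
  have B0c: "B0 \<in> carrier_mat r p" unfolding B0_def using Ic M0c by auto
  have Kc: "kron B0 M0 \<in> carrier_mat (r*p) (p*p)" using B0c M0c unfolding kron_def by auto
  have vc: "vecm A - vecm A0 \<in> carrier_vec ((p-r)*r)" unfolding vn by (rule vecm_carrier[OF AAc])
  have DUe: "DU p r A0 = 2 \<cdot>\<^sub>m (kron B0 M0 * Gamma p r)"
    unfolding DU_def B0_def M0_def T0_def X0_def I_def ..
  have B0T: "transpose_mat B0 = M0 * I" unfolding B0_def using transpose_mult[of "transpose_mat I" r p "transpose_mat M0" p] Ic M0c by simp
  have "DU p r A0 *\<^sub>v (vecm A - vecm A0) = 2 \<cdot>\<^sub>v ((kron B0 M0 * Gamma p r) *\<^sub>v (vecm A - vecm A0))"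
    unfolding DUe by (rule smult_mat_vec) (use Kc Gc vc in auto)
  also have "(kron B0 M0 * Gamma p r) *\<^sub>v (vecm A - vecm A0) = kron B0 M0 *\<^sub>v (Gamma p r *\<^sub>v (vecm A - vecm A0))"
    by (rule assoc_mult_mat_vec[OF Kc Gc vc])
  also have "\<dots> = vecm (M0 * D * transpose_mat B0)" unfolding Gv by (rule kron_vec[OF B0c M0c Dc])
  also have "M0 * D * transpose_mat B0 = W" unfolding B0T W_def
    by (rule assoc_mult_mat[OF mult_carrier_mat[OF M0c Dc] M0c Ic, symmetric])
  also have "2 \<cdot>\<^sub>v vecm W = vecm (2 \<cdot>\<^sub>m W)" by (rule vecm_smult[OF Wc, symmetric])
  finally have DUv: "DU p r A0 *\<^sub>v (vecm A - vecm A0) = vecm (2 \<cdot>\<^sub>m W)" .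
  have goal1: "vecm (Ucay p r A - Ucay p r A0) = DU p r A0 *\<^sub>v (vecm A - vecm A0) + vecm R"
    unfolding DUv goal3 by (rule vecm_add) (use Wc Rc in auto)
  have goal3': "Ucay p r A - Ucay p r A0 =
              2 \<cdot>\<^sub>m (matinv (1\<^sub>m p - Xphi p r A0) * (Xphi p r A - Xphi p r A0)
                     * matinv (1\<^sub>m p - Xphi p r A0) * Ipr p r) + R"
    using goal3 unfolding W_def M0_def T0_def X0_def D_def X_def I_def .
  show ?thesis using goal1 froR goal3' froU Rc by blast
qed

end
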